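(* For all $n\ge 1$, $|F_n(321,3124,4123)|=F_{n+1}-1$, where $F_n$ is the $n$-th Fibonacci number with $F_0=F_1=1$ and $F_n=F_{n-1}+F_{n-2}$ for $n\ge 2$.
   Context: A permutation $\pi$ avoids a classical pattern $p\in S_k$ if no subsequence of $\pi$ of length $k$ is order-isomorphic to $p$. A Fishburn permutation is a permutation $\pi=\pi_1\cdots\pi_n$ of $[n]$ for which there are no indices $i<j$ with $\pi_j<\pi_i<\pi_{i+1}$ and $\pi_i=\pi_j+1$. $F_n(\sigma_1,\dots,\sigma_k)$ denotes the set of Fishburn permutations of length $n$ avoiding each of the classical patterns $\sigma_1,\dots,\sigma_k$. *)

theory Defs
  imports Main
begin

(* A permutation of [n] is represented as a list of length n whose entries are
   exactly 1..n (each once).  Positions are 0-based list indices. *)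
definition perm_of :: "nat \<Rightarrow> nat list \<Rightarrow> bool" where
  "perm_of n \<pi> \<longleftrightarrow> distinct \<pi> \<and> set \<pi> = {1..n}"

definition contains :: "nat list \<Rightarrow> nat list \<Rightarrow> bool" where
  "contains \<pi> p \<longleftrightarrow> (\<exists>idx :: nat \<Rightarrow> nat.
      (\<forall>a b. a < b \<and> b < length p \<longrightarrow> idx a < idx b) \<and>
      (\<forall>a < length p. idx a < length \<pi>) \<and>
      (\<forall>a < length p. \<forall>b < length p.
          (\<pi> ! idx a < \<pi> ! idx b) \<longleftrightarrow> (p ! a < p ! b)))"

definition avoids :: "nat list \<Rightarrow> nat list \<Rightarrow> bool" where
  "avoids \<pi> p \<longleftrightarrow> \<not> contains \<pi> p"

definition fishburn :: "nat list \<Rightarrow> bool" where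
  "fishburn \<pi> \<longleftrightarrow> \<not> (\<exists>i j. i < j \<and> j < length \<pi> \<and> i + 1 < length \<pi> \<and>
      \<pi> ! j < \<pi> ! i \<and> \<pi> ! i < \<pi> ! (i + 1) \<and> \<pi> ! i = \<pi> ! j + 1)"

definition Fish_av :: "nat \<Rightarrow> nat list list \<Rightarrow> nat list set" where
  "Fish_av n ps = {\<pi>. perm_of n \<pi> \<and> fishburn \<pi> \<and> (\<forall>p \<in> set ps. avoids \<pi> p)}"

fun fib1 :: "nat \<Rightarrow> nat" where
  "fib1 0 = 1"
| "fib1 (Suc 0) = 1"
| "fib1 (Suc (Suc n)) = fib1 (Suc n) + fib1 n"

end

theory Submission imports Defs begin

lemma all_less_3: "(\<forall>a<(3::nat). P a) = (P 0 \<and> P 1 \<and> P 2)"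
  by (auto simp: numeral_eq_Suc less_Suc_eq)
lemma all_less_4: "(\<forall>a<(4::nat). P a) = (P 0 \<and> P 1 \<and> P 2 \<and> P 3)"
  by (auto simp: numeral_eq_Suc less_Suc_eq)

lemma c321_E: "contains \<pi> [3,2,1] \<Longrightarrow> \<exists>i j k. i<j \<and> j<k \<and> k<length \<pi> \<and> \<pi>!k<\<pi>!j \<and> \<pi>!j<\<pi>!i"
proof -
  assume "contains \<pi> [3,2,1]"
  then obtain idx where h: "\<forall>a b. a < b \<and> b < length [3,2,1::nat] \<longrightarrow> idx a < idx b"
    "\<forall>a < length [3,2,1::nat]. idx a < length \<pi>"
    "\<forall>a < length [3,2,1::nat]. \<forall>b < length [3,2,1::nat]. (\<pi> ! idx a < \<pi> ! idx b) \<longleftrightarrow> ([3,2,1::nat] ! a < [3,2,1] ! b)"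
    unfolding contains_def by blast
  from h(1)[rule_format, of 0 1] h(1)[rule_format, of 1 2] h(2)[rule_format, of 2]
    h(3)[rule_format, of 2 1] h(3)[rule_format, of 1 0]
  show ?thesis by auto
qed

lemma c321_I: "i<j \<Longrightarrow> j<k \<Longrightarrow> k<length \<pi> \<Longrightarrow> \<pi>!k<\<pi>!j \<Longrightarrow> \<pi>!j<\<pi>!i \<Longrightarrow> contains \<pi> [3,2,1]"
  unfolding contains_def
  apply (rule exI[of _ "\<lambda>a. if a=0 then i else if a=1 then j else k"])
  by (simp add: all_less_3)

lemma c3124_E: "contains \<pi> [3,1,2,4] \<Longrightarrow> \<exists>a b c d. a<b \<and> b<c \<and> c<d \<and> d<length \<pi> \<and> \<pi>!b<\<pi>!c \<and> \<pi>!c<\<pi>!a \<and> \<pi>!a<\<pi>!d"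
proof -
  assume "contains \<pi> [3,1,2,4]"
  then obtain idx where h: "\<forall>a b. a < b \<and> b < length [3,1,2,4::nat] \<longrightarrow> idx a < idx b"
    "\<forall>a < length [3,1,2,4::nat]. idx a < length \<pi>"
    "\<forall>a < length [3,1,2,4::nat]. \<forall>b < length [3,1,2,4::nat]. (\<pi> ! idx a < \<pi> ! idx b) \<longleftrightarrow> ([3,1,2,4::nat] ! a < [3,1,2,4] ! b)"
    unfolding contains_def by blast
  from h(1)[rule_format, of 0 1] h(1)[rule_format, of 1 2] h(1)[rule_format, of 2 3] h(2)[rule_format, of 3]
    h(3)[rule_format, of 1 2] h(3)[rule_format, of 2 0] h(3)[rule_format, of 0 3]
  show ?thesis by auto
qed

lemma c3124_I: "a<b \<Longrightarrow> b<c \<Longrightarrow> c<d \<Longrightarrow> d<length \<pi> \<Longrightarrow> \<pi>!b<\<pi>!c \<Longrightarrow> \<pi>!c<\<pi>!a \<Longrightarrow> \<pi>!a<\<pi>!d \<Longrightarrow> contains \<pi> [3,1,2,4]"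
  unfolding contains_def
  apply (rule exI[of _ "\<lambda>x. if x=0 then a else if x=1 then b else if x=2 then c else d"])
  by (simp add: all_less_4)

lemma c4123_E: "contains \<pi> [4,1,2,3] \<Longrightarrow> \<exists>a b c d. a<b \<and> b<c \<and> c<d \<and> d<length \<pi> \<and> \<pi>!b<\<pi>!c \<and> \<pi>!c<\<pi>!d \<and> \<pi>!d<\<pi>!a"
proof -
  assume "contains \<pi> [4,1,2,3]"
  then obtain idx where h: "\<forall>a b. a < b \<and> b < length [4,1,2,3::nat] \<longrightarrow> idx a < idx b"
    "\<forall>a < length [4,1,2,3::nat]. idx a < length \<pi>"
    "\<forall>a < length [4,1,2,3::nat]. \<forall>b < length [4,1,2,3::nat]. (\<pi> ! idx a < \<pi> ! idx b) \<longleftrightarrow> ([4,1,2,3::nat] ! a < [4,1,2,3] ! b)"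
    unfolding contains_def by blast
  from h(1)[rule_format, of 0 1] h(1)[rule_format, of 1 2] h(1)[rule_format, of 2 3] h(2)[rule_format, of 3]
    h(3)[rule_format, of 1 2] h(3)[rule_format, of 2 3] h(3)[rule_format, of 3 0]
  show ?thesis by auto
qed

lemma c4123_I: "a<b \<Longrightarrow> b<c \<Longrightarrow> c<d \<Longrightarrow> d<length \<pi> \<Longrightarrow> \<pi>!b<\<pi>!c \<Longrightarrow> \<pi>!c<\<pi>!d \<Longrightarrow> \<pi>!d<\<pi>!a \<Longrightarrow> contains \<pi> [4,1,2,3]"
  unfolding contains_def
  apply (rule exI[of _ "\<lambda>x. if x=0 then a else if x=1 then b else if x=2 then c else d"])
  by (simp add: all_less_4)


lemma nth_shift: "length pre = k \<Longrightarrow> i \<ge> k \<Longrightarrow> i < k + length \<sigma> \<Longrightarrow> (pre @ map (\<lambda>x. x+k) \<sigma>) ! i = \<sigma> ! (i-k) + k"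
  by (simp add: nth_append)

lemma contains_shift:
  assumes "length pre = k" "k \<le> 2" "\<forall>x\<in>set pre. x \<le> k" "length p \<ge> 3" "p!2 < p!0"
  shows "contains (pre @ map (\<lambda>x. x+k) \<sigma>) p \<longleftrightarrow> contains \<sigma> p"
proof
  let ?\<pi> = "pre @ map (\<lambda>x. x+k) \<sigma>"
  assume "contains ?\<pi> p"
  then obtain idx where h1: "\<forall>a b. a < b \<and> b < length p \<longrightarrow> idx a < idx b"
    and h2: "\<forall>a < length p. idx a < length ?\<pi>"
    and h3: "\<forall>a < length p. \<forall>b < length p. (?\<pi> ! idx a < ?\<pi> ! idx b) \<longleftrightarrow> (p ! a < p ! b)"
    unfolding contains_def by blast
  have i01: "idx 0 < idx 1" "idx 1 < idx 2" using h1 assms(4) by auto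
  have k0: "idx 0 \<ge> k"
  proof (rule ccontr)
    assume "\<not> k \<le> idx 0"
    then have "?\<pi> ! idx 0 = pre ! idx 0" using assms(1) by (simp add: nth_append)
    also have "\<dots> \<le> k" using assms(3) \<open>\<not> k \<le> idx 0\<close> assms(1) by auto
    finally have a: "?\<pi> ! idx 0 \<le> k" .
    have "?\<pi> ! idx 2 = \<sigma> ! (idx 2 - k) + k" using nth_shift[OF assms(1), of "idx 2" \<sigma>] i01 assms(1,2,4) h2 by simp
    with a have "\<not> ?\<pi> ! idx 2 < ?\<pi> ! idx 0" by simp
    moreover have "(?\<pi> ! idx 2 < ?\<pi> ! idx 0) = (p!2 < p!0)" proof -
      have l: "2 < length p" "0 < length p" using assms(4) by auto
      show ?thesis using h3 l by blast
    qed
    ultimately show False using assms(5) by simp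
  qed
  have ge: "\<forall>a<length p. idx a \<ge> k"
  proof (intro allI impI)
    fix a assume "a < length p"
    show "idx a \<ge> k" proof (cases "a = 0")
      case False then have "idx 0 < idx a" using h1 \<open>a < length p\<close> by blast
      thus ?thesis using k0 by simp
    qed (use k0 in simp)
  qed
  show "contains \<sigma> p" unfolding contains_def
  proof (rule exI[of _ "\<lambda>a. idx a - k"], intro conjI allI impI)
    fix a b assume "a < b \<and> b < length p"
    thus "idx a - k < idx b - k" using h1 ge by (metis diff_less_mono order.strict_trans)
  next
    fix a assume "a < length p" thus "idx a - k < length \<sigma>" using h2 ge assms(1) by fastforce
  next
    fix a b assume ab: "a < length p" "b < length p"
    show "(\<sigma> ! (idx a - k) < \<sigma> ! (idx b - k)) = (p ! a < p ! b)"
      using h3[rule_format, OF ab] nth_shift[OF assms(1), of "idx a" \<sigma>] nth_shift[OF assms(1), of "idx b" \<sigma>] ge ab h2 assms(1) by simp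
  qed
next
  let ?\<pi> = "pre @ map (\<lambda>x. x+k) \<sigma>"
  assume "contains \<sigma> p"
  then obtain idx where h1: "\<forall>a b. a < b \<and> b < length p \<longrightarrow> idx a < idx b"
    and h2: "\<forall>a < length p. idx a < length \<sigma>"
    and h3: "\<forall>a < length p. \<forall>b < length p. (\<sigma> ! idx a < \<sigma> ! idx b) \<longleftrightarrow> (p ! a < p ! b)"
    unfolding contains_def by blast
  show "contains ?\<pi> p" unfolding contains_def
  proof (rule exI[of _ "\<lambda>a. idx a + k"], intro conjI allI impI)
    fix a b assume "a < b \<and> b < length p"
    thus "idx a + k < idx b + k" using h1 by simp
  next
    fix a assume "a < length p" thus "idx a + k < length ?\<pi>" using h2 assms(1) by fastforce
  next
    fix a b assume ab: "a < length p" "b < length p"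
    show "(?\<pi> ! (idx a + k) < ?\<pi> ! (idx b + k)) = (p ! a < p ! b)"
      using h3[rule_format, OF ab] nth_shift[OF assms(1), of "idx a + k" \<sigma>] nth_shift[OF assms(1), of "idx b + k" \<sigma>] h2 ab by simp
  qed
qed

lemma fishburn_shift:
  assumes "length pre = k" "\<forall>i<k. pre!i = 1 \<or> (i+1<k \<and> pre!(i+1) < pre!i)" "0 \<notin> set pre"
  shows "fishburn (pre @ map (\<lambda>x. x+k) \<sigma>) \<longleftrightarrow> fishburn \<sigma>"
proof
  let ?\<pi> = "pre @ map (\<lambda>x. x+k) \<sigma>"
  assume f: "fishburn ?\<pi>"
  show "fishburn \<sigma>" unfolding fishburn_def
  proof
    assume "\<exists>i j. i < j \<and> j < length \<sigma> \<and> i + 1 < length \<sigma> \<and>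
      \<sigma> ! j < \<sigma> ! i \<and> \<sigma> ! i < \<sigma> ! (i + 1) \<and> \<sigma> ! i = \<sigma> ! j + 1"
    then obtain i j where v: "i < j" "j < length \<sigma>" "i + 1 < length \<sigma>"
      "\<sigma> ! j < \<sigma> ! i" "\<sigma> ! i < \<sigma> ! (i + 1)" "\<sigma> ! i = \<sigma> ! j + 1" by blast
    have e: "\<And>t. t < length \<sigma> \<Longrightarrow> ?\<pi> ! (t + k) = \<sigma> ! t + k" using nth_shift[OF assms(1)] by simp
    have "i+k < j+k \<and> j+k < length ?\<pi> \<and> (i+k) + 1 < length ?\<pi> \<and>
      ?\<pi> ! (j+k) < ?\<pi> ! (i+k) \<and> ?\<pi> ! (i+k) < ?\<pi> ! ((i+k) + 1) \<and> ?\<pi> ! (i+k) = ?\<pi> ! (j+k) + 1"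
      using v e[of i] e[of j] e[of "i+1"] assms(1) by (simp add: add.commute add.left_commute)
    with f show False unfolding fishburn_def by blast
  qed
next
  let ?\<pi> = "pre @ map (\<lambda>x. x+k) \<sigma>"
  assume f: "fishburn \<sigma>"
  show "fishburn ?\<pi>" unfolding fishburn_def
  proof
    assume "\<exists>i j. i < j \<and> j < length ?\<pi> \<and> i + 1 < length ?\<pi> \<and>
      ?\<pi> ! j < ?\<pi> ! i \<and> ?\<pi> ! i < ?\<pi> ! (i + 1) \<and> ?\<pi> ! i = ?\<pi> ! j + 1"
    then obtain i j where v: "i < j" "j < length ?\<pi>" "i + 1 < length ?\<pi>"
      "?\<pi> ! j < ?\<pi> ! i" "?\<pi> ! i < ?\<pi> ! (i + 1)" "?\<pi> ! i = ?\<pi> ! j + 1" by blast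
    show False
    proof (cases "i < k")
      case True
      have pi: "?\<pi> ! i = pre ! i" using True assms(1) by (simp add: nth_append)
      from assms(2) True consider "pre ! i = 1" | "i+1<k \<and> pre!(i+1) < pre!i" by blast
      then show False
      proof cases
        case 1
        then have "?\<pi> ! j = 0" using v(6) pi by simp
        moreover have "?\<pi> ! j \<noteq> 0"
        proof (cases "j < k")
          case True then have "?\<pi> ! j = pre ! j" using assms(1) by (simp add: nth_append)
          then show ?thesis using assms(1,3) nth_mem[of j pre] True by metis
        next
          case False then show ?thesis using nth_shift[OF assms(1), of j \<sigma>] \<open>i<k\<close> v(2) assms(1) by simp
        qed
        ultimately show False by simp
      next
        case 2
        then have "?\<pi> ! (i+1) = pre ! (i+1)" using assms(1) by (simp add: nth_append)
        with 2 pi v(5) show False by simp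
      qed
    next
      case False
      have e: "\<And>t. t \<ge> k \<Longrightarrow> t < length ?\<pi> \<Longrightarrow> ?\<pi> ! t = \<sigma> ! (t - k) + k" using nth_shift[OF assms(1)] assms(1) by simp
      have ar: "i-k < j-k" "j-k < length \<sigma>" "(i-k) + 1 < length \<sigma>" "i + 1 - k = (i-k)+1"
        using v(1,2,3) assms(1) False by auto
      have "i-k < j-k \<and> j-k < length \<sigma> \<and> (i-k) + 1 < length \<sigma> \<and>
        \<sigma> ! (j-k) < \<sigma> ! (i-k) \<and> \<sigma> ! (i-k) < \<sigma> ! ((i-k) + 1) \<and> \<sigma> ! (i-k) = \<sigma> ! (j-k) + 1"
        using v(4,5,6) e[of i] e[of j] e[of "i+1"] ar v(1,2,3) False by simp
      with f show False unfolding fishburn_def by blast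
    qed
  qed
qed

lemma perm_shift:
  assumes "distinct pre" "set pre = {1..k}" "k \<le> n"
  shows "perm_of n (pre @ map (\<lambda>x. x+k) \<sigma>) \<longleftrightarrow> perm_of (n-k) \<sigma>"
proof
  assume h: "perm_of n (pre @ map (\<lambda>x. x+k) \<sigma>)"
  have d: "distinct \<sigma>" using h unfolding perm_of_def by (simp add: distinct_map)
  have disj: "set pre \<inter> (\<lambda>x. x+k) ` set \<sigma> = {}" using h unfolding perm_of_def by simp
  have un: "{1..k} \<union> (\<lambda>x. x+k) ` set \<sigma> = {1..n}" using h assms(2) unfolding perm_of_def by simp
  have img: "(\<lambda>x. x+k) ` set \<sigma> = {k+1..n}"
  proof -
    have "(\<lambda>x. x+k) ` set \<sigma> = {1..n} - {1..k}" using un disj assms(2) by blast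
    also have "\<dots> = {k+1..n}" by auto
    finally show ?thesis .
  qed
  have "set \<sigma> = {1..n-k}"
  proof
    show "set \<sigma> \<subseteq> {1..n-k}"
    proof
      fix x assume "x \<in> set \<sigma>" then have "x + k \<in> {k+1..n}" using img by blast
      then show "x \<in> {1..n-k}" by auto
    qed
  next
    show "{1..n-k} \<subseteq> set \<sigma>"
    proof
      fix y assume "y \<in> {1..n-k}" then have "y + k \<in> {k+1..n}" by auto
      then have "y + k \<in> (\<lambda>x. x+k) ` set \<sigma>" using img by simp
      then show "y \<in> set \<sigma>" by auto
    qed
  qed
  with d show "perm_of (n-k) \<sigma>" unfolding perm_of_def by simp
next
  assume h: "perm_of (n-k) \<sigma>"
  have "distinct (map (\<lambda>x. x+k) \<sigma>)" using h unfolding perm_of_def by (simp add: distinct_map)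
  moreover have img: "(\<lambda>x. x+k) ` set \<sigma> = {k+1..n}"
  proof -
    have "(\<lambda>x. x+k) ` {1..n-k} = {k+1..n}" using assms(3)
      by (auto simp: image_iff intro!: bexI[where x="_ - k"])
    then show ?thesis using h unfolding perm_of_def by simp
  qed
  moreover have "{1..k} \<union> {k+1..n} = {1..n}" using assms(3) by auto
  ultimately show "perm_of n (pre @ map (\<lambda>x. x+k) \<sigma>)" using assms unfolding perm_of_def by auto
qed


definition T :: "nat \<Rightarrow> nat list" where
  "T n = 3 # 1 # [4..<n+1] @ [2]"

lemma T_len: "n \<ge> 3 \<Longrightarrow> length (T n) = n" by (simp add: T_def del: upt_Suc)

lemma T_nth: "n \<ge> 3 \<Longrightarrow> i < n \<Longrightarrow>
   T n ! i = (if i = 0 then 3 else if i = 1 then 1 else if i = n - 1 then 2 else i + 2)"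
proof -
  assume n: "n \<ge> 3" and i: "i < n"
  show ?thesis
  proof (cases "i \<ge> 2")
    case True
    then obtain t where t: "i = Suc (Suc t)" by (metis add_2_eq_Suc le_Suc_ex)
    have "T n ! i = ([4..<n+1] @ [2]) ! t" using t by (simp add: T_def)
    also have "\<dots> = (if t < n - 3 then t + 4 else 2)" using i t n by (simp del: upt_Suc add: nth_append)
    finally show ?thesis using True t n i by auto
  next
    case False
    then have "i = 0 \<or> i = 1" by auto
    then show ?thesis using n by (auto simp: T_def)
  qed
qed

lemma T_perm: "n \<ge> 3 \<Longrightarrow> perm_of n (T n)"
  unfolding perm_of_def T_def by (auto simp del: upt_Suc)

lemma T_vals: "n \<ge> 3 \<Longrightarrow> i < n \<Longrightarrow> T n ! i \<ge> 1"
  by (simp add: T_nth)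

lemma T_inv: "n \<ge> 3 \<Longrightarrow> a < b \<Longrightarrow> b < n \<Longrightarrow> T n ! b < T n ! a \<Longrightarrow> b = n - 1 \<or> (a = 0 \<and> b = 1)"
  by (auto simp: T_nth split: if_splits)

lemma T_fish: "n \<ge> 3 \<Longrightarrow> fishburn (T n)"
  unfolding fishburn_def by (auto simp: T_len T_nth split: if_splits)

lemma T_321: "n \<ge> 3 \<Longrightarrow> \<not> contains (T n) [3,2,1]"
proof
  assume n: "n \<ge> 3" and "contains (T n) [3,2,1]"
  then obtain i j k where h: "i<j" "j<k" "k<length (T n)" "T n!k<T n!j" "T n!j<T n!i"
    using c321_E by blast
  have "j = 1" using T_inv[OF n h(1) _ h(5)] h T_len[OF n] by auto
  then show False using h T_len[OF n] T_nth[OF n] by (auto split: if_splits)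
qed

lemma T_3124: "n \<ge> 3 \<Longrightarrow> \<not> contains (T n) [3,1,2,4]"
proof
  assume n: "n \<ge> 3" and "contains (T n) [3,1,2,4]"
  then obtain a b c d where h: "a<b" "b<c" "c<d" "d<length (T n)" "T n!b<T n!c" "T n!c<T n!a" "T n!a<T n!d"
    using c3124_E by blast
  have "a = 0 \<and> b = 1" using T_inv[OF n h(1), of ] h T_len[OF n] by auto
  then show False using h T_len[OF n] T_nth[OF n] by (auto split: if_splits)
qed

lemma T_4123: "n \<ge> 3 \<Longrightarrow> \<not> contains (T n) [4,1,2,3]"
proof
  assume n: "n \<ge> 3" and "contains (T n) [4,1,2,3]"
  then obtain a b c d where h: "a<b" "b<c" "c<d" "d<length (T n)" "T n!b<T n!c" "T n!c<T n!d" "T n!d<T n!a"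
    using c4123_E by blast
  have "a = 0 \<and> b = 1" using T_inv[OF n h(1), of ] h T_len[OF n] by auto
  then show False using h T_len[OF n] T_nth[OF n] by (auto split: if_splits)
qed


abbreviation PP :: "nat list list" where "PP \<equiv> [[3,2,1],[3,1,2,4],[4,1,2,3]]"

lemma Fish_avD:
  assumes "\<pi> \<in> Fish_av n PP"
  shows "length \<pi> = n" "distinct \<pi>" "set \<pi> = {1..n}" "fishburn \<pi>"
    "\<not> contains \<pi> [3,2,1]" "\<not> contains \<pi> [3,1,2,4]" "\<not> contains \<pi> [4,1,2,3]"
proof -
  have p: "distinct \<pi>" "set \<pi> = {1..n}" "fishburn \<pi>" "\<forall>p\<in>set PP. avoids \<pi> p"
    using assms unfolding Fish_av_def perm_of_def by auto
  have "length \<pi> = card (set \<pi>)" using distinct_card[OF p(1)] by simp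
  then show "length \<pi> = n" using p(2) by simp
  show "distinct \<pi>" "set \<pi> = {1..n}" "fishburn \<pi>" using p by auto
  show "\<not> contains \<pi> [3,2,1]" "\<not> contains \<pi> [3,1,2,4]" "\<not> contains \<pi> [4,1,2,3]"
    using p(4) unfolding avoids_def by simp_all
qed

lemma mono_gap:
  assumes "\<And>k. lo \<le> k \<Longrightarrow> k+1 \<le> hi \<Longrightarrow> (f::nat\<Rightarrow>nat) k < f (k+1)" "lo \<le> i"
  shows "i \<le> j \<Longrightarrow> j \<le> hi \<Longrightarrow> f i + (j - i) \<le> f j"
proof (induction j)
  case 0 then show ?case by simp
next
  case (Suc j)
  show ?case
  proof (cases "i = Suc j")
    case False
    then have "i \<le> j" using Suc by simp
    then have "f i + (j - i) \<le> f j" using Suc by simp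
    moreover have "f j < f (j+1)" using assms(1)[of j] assms(2) \<open>i \<le> j\<close> Suc by simp
    ultimately show ?thesis using \<open>i \<le> j\<close> by simp
  qed simp
qed

lemma nth_ne: "xs!i = a \<Longrightarrow> xs!j = b \<Longrightarrow> a \<noteq> b \<Longrightarrow> i \<noteq> j" by auto

lemma char:
  assumes F: "\<pi> \<in> Fish_av n PP" and n: "n \<ge> 1"
  shows "\<pi>!0 = 1 \<or> (\<pi>!0 = 2 \<and> \<pi>!1 = 1) \<or> (n \<ge> 3 \<and> \<pi> = T n)"
proof -
  note D = Fish_avD[OF F]
  have mem: "\<And>i. i < n \<Longrightarrow> \<pi>!i \<in> {1..n}" using D(1,3) nth_mem by blast
  have inj: "\<And>i j. i < n \<Longrightarrow> j < n \<Longrightarrow> \<pi>!i = \<pi>!j \<Longrightarrow> i = j"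
    using D(1,2) nth_eq_iff_index_eq by blast
  have pos: "\<exists>i<n. \<pi>!i = v" if "v \<in> {1..n}" for v
  proof -
    have "v \<in> set \<pi>" using D(3) that by simp
    then obtain i where "i < length \<pi>" "\<pi>!i = v" by (auto simp: in_set_conv_nth)
    then show ?thesis using D(1) by auto
  qed
  have nf: "\<And>i j. i < j \<Longrightarrow> j < n \<Longrightarrow> i + 1 < n \<Longrightarrow> \<pi> ! j < \<pi> ! i \<Longrightarrow> \<pi> ! i < \<pi> ! (i + 1) \<Longrightarrow> \<pi> ! i = \<pi> ! j + 1 \<Longrightarrow> False"
    using D(4,1) unfolding fishburn_def by blast
  have n321: "\<And>i j k. i<j \<Longrightarrow> j<k \<Longrightarrow> k<n \<Longrightarrow> \<pi>!k<\<pi>!j \<Longrightarrow> \<pi>!j<\<pi>!i \<Longrightarrow> False"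
    using D(5,1) c321_I by blast
  have n3124: "\<And>a b c d. a<b \<Longrightarrow> b<c \<Longrightarrow> c<d \<Longrightarrow> d<n \<Longrightarrow> \<pi>!b<\<pi>!c \<Longrightarrow> \<pi>!c<\<pi>!a \<Longrightarrow> \<pi>!a<\<pi>!d \<Longrightarrow> False"
    using D(6,1) c3124_I by blast
  have n4123: "\<And>a b c d. a<b \<Longrightarrow> b<c \<Longrightarrow> c<d \<Longrightarrow> d<n \<Longrightarrow> \<pi>!b<\<pi>!c \<Longrightarrow> \<pi>!c<\<pi>!d \<Longrightarrow> \<pi>!d<\<pi>!a \<Longrightarrow> False"
    using D(7,1) c4123_I by blast
  define m where "m = \<pi>!0"
  have m: "m \<in> {1..n}" using mem n m_def by simp
  have "1 \<le> m" using m by simp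
  then consider "m = 1" | "m = 2" | "m = 3" | "m \<ge> 4" by linarith
  then show ?thesis
  proof cases
    case 1 then show ?thesis using m_def by simp
  next
    case 2
    obtain j1 where j1: "j1 < n" "\<pi>!j1 = 1" using pos[of 1] n by auto
    have "j1 \<noteq> 0" proof assume "j1 = 0" then show False using j1 m_def 2 by simp qed
    have n2: "1 < n" using m 2 by auto
    show ?thesis
    proof (cases "j1 = 1")
      case True then show ?thesis using j1 m_def 2 by simp
    next
      case False
      have "\<pi>!1 \<noteq> 1" using inj[of 1 j1] j1 False n2 by auto
      moreover have "\<pi>!1 \<noteq> 2" using inj[of 1 0] n2 m_def 2 by auto
      moreover have "\<pi>!1 \<in> {1..n}" using mem n2 by simp
      ultimately have "\<pi>!1 > 2" by auto
      then have False using nf[of 0 j1] j1 \<open>j1 \<noteq> 0\<close> n2 m_def 2 by simp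
      then show ?thesis ..
    qed
  next
    case 4
    have n4: "n \<ge> 4" using m 4 by simp
    obtain j1 where j1: "j1 < n" "\<pi>!j1 = 1" using pos[of 1] n4 by auto
    obtain j2 where j2: "j2 < n" "\<pi>!j2 = 2" using pos[of 2] n4 by auto
    obtain j3 where j3: "j3 < n" "\<pi>!j3 = 3" using pos[of 3] n4 by auto
    have nz: "j1 \<noteq> 0" "j2 \<noteq> 0" "j3 \<noteq> 0" using nth_ne[OF j1(2) m_def[symmetric]] nth_ne[OF j2(2) m_def[symmetric]] nth_ne[OF j3(2) m_def[symmetric]] 4 by simp_all
    have d: "j1 \<noteq> j2" "j2 \<noteq> j3" using j1 j2 j3 by auto
    have False
    proof (cases "j2 < j1")
      case True then show False using n321[of 0 j2 j1] nz j1 j2 4 m_def by simp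
    next
      case False
      then have a: "j1 < j2" using d by simp
      show False
      proof (cases "j3 < j2")
        case True then show False using n321[of 0 j3 j2] nz j3 j2 4 m_def by simp
      next
        case False
        then have "j2 < j3" using d by simp
        then show False using n4123[of 0 j1 j2 j3] a nz j1 j2 j3 4 m_def by simp
      qed
    qed
    then show ?thesis ..
  next
    case 3
    have n3: "n \<ge> 3" using m 3 by simp
    obtain j1 where j1: "j1 < n" "\<pi>!j1 = 1" using pos[of 1] n3 by auto
    obtain j2 where j2: "j2 < n" "\<pi>!j2 = 2" using pos[of 2] n3 by auto
    have nz: "j1 \<noteq> 0" "j2 \<noteq> 0" using nth_ne[OF j1(2) m_def[symmetric]] nth_ne[OF j2(2) m_def[symmetric]] 3 by simp_all
    have "j1 \<noteq> j2" using j1 j2 by auto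
    moreover have "\<not> j2 < j1" using n321[of 0 j2 j1] nz j1 j2 3 m_def by auto
    ultimately have j12: "j1 < j2" by simp
    have p1: "j1 = 1"
    proof (rule ccontr)
      assume "j1 \<noteq> 1"
      then have "\<pi>!1 \<noteq> 1" using inj[of 1 j1] j1 n3 by auto
      moreover have "\<pi>!1 \<noteq> 2" using inj[of 1 j2] j2 n3 j12 nz by auto
      moreover have "\<pi>!1 \<noteq> 3" using inj[of 1 0] n3 m_def 3 by auto
      moreover have "\<pi>!1 \<in> {1..n}" using mem n3 by simp
      ultimately have "\<pi>!1 > 3" by auto
      then show False using nf[of 0 j2] j2 nz n3 m_def 3 by simp
    qed
    have p2: "j2 = n - 1"
    proof (rule ccontr)
      assume "j2 \<noteq> n - 1"
      then have lt: "j2 < n - 1" using j2 by simp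
      have "\<pi>!(n-1) \<noteq> 1" using inj[of "n-1" j1] j1 lt p1 n3 j12 by auto
      moreover have "\<pi>!(n-1) \<noteq> 2" using inj[of "n-1" j2] j2 lt by auto
      moreover have "\<pi>!(n-1) \<noteq> 3" using inj[of "n-1" 0] n3 m_def 3 by auto
      moreover have "\<pi>!(n-1) \<in> {1..n}" using mem n3 by simp
      ultimately have "\<pi>!(n-1) > 3" by auto
      then show False using n3124[of 0 1 j2 "n-1"] lt j12 p1 j1 j2 m_def 3 n3 by simp
    qed
    have midv: "\<And>i. 2 \<le> i \<Longrightarrow> i < n - 1 \<Longrightarrow> \<pi>!i \<ge> 4 \<and> \<pi>!i \<le> n"
    proof -
      fix i assume i: "2 \<le> i" "i < n - 1"
      have iN: "i < n" using i by simp
      have "\<pi>!i \<noteq> 1" using inj[of i j1] j1 i iN p1 by auto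
      moreover have "\<pi>!i \<noteq> 2" using inj[of i j2] j2 i iN p2 by auto
      moreover have "\<pi>!i \<noteq> 3" using inj[of i 0] i iN m_def 3 by auto
      moreover have "\<pi>!i \<in> {1..n}" using mem iN by simp
      ultimately show "\<pi>!i \<ge> 4 \<and> \<pi>!i \<le> n" by auto
    qed
    have adj: "\<And>k. 2 \<le> k \<Longrightarrow> k+1 \<le> n - 2 \<Longrightarrow> \<pi>!k < \<pi>!(k+1)"
    proof (rule ccontr)
      fix k assume k: "2 \<le> k" "k+1 \<le> n - 2" "\<not> \<pi>!k < \<pi>!(k+1)"
      have kN: "k+1 < n" "k < n" using k by auto
      have "\<pi>!k \<noteq> \<pi>!(k+1)" using inj[of k "k+1"] kN by auto
      then have lt1: "\<pi>!(k+1) < \<pi>!k" using k by simp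
      have kk: "k+1 < n - 1" using k by linarith
      then have "\<pi>!(k+1) > 2" using midv[of "k+1"] k by simp
      note lt1
      show False using kk lt1 \<open>\<pi>!(k+1) > 2\<close> n321[of k "k+1" "n-1"] k kN j2 p2 by simp
    qed
    have "\<pi> = T n"
    proof (rule nth_equalityI)
      show "length \<pi> = length (T n)" using D(1) T_len[OF n3] by simp
    next
      fix i assume "i < length \<pi>"
      then have i: "i < n" using D(1) by simp
      consider "i = 0" | "i = 1" | "i = n - 1" | "2 \<le> i \<and> i < n - 1" using i by linarith
      then show "\<pi>!i = T n ! i"
      proof cases
        case 1 then show ?thesis using T_nth[OF n3 i] m_def 3 by simp
      next
        case 2 then show ?thesis using T_nth[OF n3 i] j1 p1 by simp
      next
        case 3 then show ?thesis using T_nth[OF n3 i] j2 p2 n3 by simp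
      next
        case 4
        have iB: "2 \<le> i" "i \<le> n - 2" "2 < n - 1" "n - 2 < n - 1" "(2::nat) \<le> n - 2" using 4 by auto
        have adj': "\<And>k. 2 \<le> k \<Longrightarrow> k+1 \<le> n - 2 \<Longrightarrow> (\<lambda>k. \<pi>!k) k < (\<lambda>k. \<pi>!k) (k+1)" using adj by simp
        have lo: "\<pi>!2 + (i - 2) \<le> \<pi>!i" using mono_gap[of 2 "n-2" "\<lambda>k. \<pi>!k" 2 i, OF adj' _ iB(1) iB(2)] by simp
        have hi: "\<pi>!i + (n - 2 - i) \<le> \<pi>!(n-2)" using mono_gap[of 2 "n-2" "\<lambda>k. \<pi>!k" i "n-2", OF adj' iB(1) iB(2)] by simp
        have "\<pi>!2 \<ge> 4" using midv[of 2] iB by simp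
        moreover have "\<pi>!(n-2) \<le> n" using midv[of "n-2"] iB by simp
        ultimately have "\<pi>!i = i + 2" using lo hi 4 by linarith
        then show ?thesis using T_nth[OF n3 i] 4 by simp
      qed
    qed
    then show ?thesis using n3 by simp
  qed
qed


lemma PP_props: "\<forall>p\<in>set PP. length p \<ge> 3 \<and> p!2 < p!0" by simp

lemma Fish_av_iff: "\<pi> \<in> Fish_av n PP \<longleftrightarrow> perm_of n \<pi> \<and> fishburn \<pi> \<and>
   \<not> contains \<pi> [3,2,1] \<and> \<not> contains \<pi> [3,1,2,4] \<and> \<not> contains \<pi> [4,1,2,3]"
  unfolding Fish_av_def avoids_def by simp

lemma shift_mem:
  assumes "length pre = k" "k \<le> 2" "distinct pre" "set pre = {1..k}" "k \<le> n"
    "\<forall>i<k. pre!i = 1 \<or> (i+1<k \<and> pre!(i+1) < pre!i)"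
  shows "pre @ map (\<lambda>x. x+k) \<sigma> \<in> Fish_av n PP \<longleftrightarrow> \<sigma> \<in> Fish_av (n-k) PP"
proof -
  have le: "\<forall>x\<in>set pre. x \<le> k" "0 \<notin> set pre" using assms(4) by auto
  show ?thesis unfolding Fish_av_iff
    using perm_shift[OF assms(3,4,5)] fishburn_shift[OF assms(1,6) le(2)]
      contains_shift[OF assms(1,2) le(1), of "[3,2,1]"]
      contains_shift[OF assms(1,2) le(1), of "[3,1,2,4]"]
      contains_shift[OF assms(1,2) le(1), of "[4,1,2,3]"]
    by simp
qed

lemma memA: "n \<ge> 1 \<Longrightarrow> [1] @ map (\<lambda>x. x+1) \<sigma> \<in> Fish_av n PP \<longleftrightarrow> \<sigma> \<in> Fish_av (n-1) PP"
  by (rule shift_mem) auto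

lemma memB: "n \<ge> 2 \<Longrightarrow> [2,1] @ map (\<lambda>x. x+2) \<sigma> \<in> Fish_av n PP \<longleftrightarrow> \<sigma> \<in> Fish_av (n-2) PP"
  by (rule shift_mem) (auto simp: less_Suc_eq numeral_eq_Suc)

lemma T_mem: "n \<ge> 3 \<Longrightarrow> T n \<in> Fish_av n PP"
  unfolding Fish_av_iff using T_perm T_fish T_321 T_3124 T_4123 by blast

lemma Fish_av0: "Fish_av 0 PP = {[]}"
proof -
  have "[] \<in> Fish_av 0 PP" unfolding Fish_av_iff perm_of_def fishburn_def contains_def by auto
  moreover have "\<pi> = []" if "\<pi> \<in> Fish_av 0 PP" for \<pi> using Fish_avD(1)[OF that] by simp
  ultimately show ?thesis by blast
qed

definition AA :: "nat \<Rightarrow> nat list set" where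
  "AA n = (\<lambda>\<sigma>. [1] @ map (\<lambda>x. x+1) \<sigma>) ` Fish_av (n-1) PP"
definition BB :: "nat \<Rightarrow> nat list set" where
  "BB n = (\<lambda>\<sigma>. [2,1] @ map (\<lambda>x. x+2) \<sigma>) ` Fish_av (n-2) PP"

lemma decomp:
  assumes n: "n \<ge> 1"
  shows "Fish_av n PP = AA n \<union> (if n \<ge> 2 then BB n else {}) \<union> (if n \<ge> 3 then {T n} else {})"
proof
  show "Fish_av n PP \<subseteq> AA n \<union> (if n \<ge> 2 then BB n else {}) \<union> (if n \<ge> 3 then {T n} else {})"
  proof
    fix \<pi> assume F: "\<pi> \<in> Fish_av n PP"
    note D = Fish_avD[OF F]
    have mem: "\<And>x. x \<in> set \<pi> \<Longrightarrow> 1 \<le> x" using D(3) by auto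
    from char[OF F n] consider "\<pi>!0 = 1" | "\<pi>!0 = 2 \<and> \<pi>!1 = 1" | "n \<ge> 3 \<and> \<pi> = T n" by blast
    then show "\<pi> \<in> AA n \<union> (if n \<ge> 2 then BB n else {}) \<union> (if n \<ge> 3 then {T n} else {})"
    proof cases
      case 1
      obtain x xs where px: "\<pi> = x # xs" using D(1) n by (cases \<pi>) auto
      have x1: "x = 1" using 1 px by simp
      have m1: "\<And>z. z\<in>set xs \<Longrightarrow> 1 \<le> z" using mem px by simp
      define \<sigma> where "\<sigma> = map (\<lambda>x. x - 1) xs"
      have "map (\<lambda>x. x+1) \<sigma> = xs" unfolding \<sigma>_def map_map
      proof (rule map_idI)
        fix z assume "z \<in> set xs" then have "1 \<le> z" by (rule m1)
        then show "((\<lambda>x. x+1) \<circ> (\<lambda>x. x-1)) z = z" by simp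
      qed
      then have eq: "\<pi> = [1] @ map (\<lambda>x. x+1) \<sigma>" using px x1 by simp
      then have "\<sigma> \<in> Fish_av (n-1) PP" using memA[OF n] F by simp
      then show ?thesis using eq unfolding AA_def by blast
    next
      case 2
      have "\<pi>!0 \<in> set \<pi>" using D(1) n by simp
      then have "(2::nat) \<in> {1..n}" using D(3) 2 by simp
      then have n2: "n \<ge> 2" by simp
      obtain x y xs where px: "\<pi> = x # y # xs" using D(1) n2
        by (cases \<pi> rule: remdups_adj.cases) auto
      have x2: "x = 2" "y = 1" using 2 px by auto
      have mem2: "\<And>z. z \<in> set xs \<Longrightarrow> 2 \<le> z"
      proof -
        fix z assume z: "z \<in> set xs"
        have "z \<noteq> 1" using D(2) px x2 z by auto
        moreover have "z \<ge> 1" using mem px z by auto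
        ultimately show "2 \<le> z" by simp
      qed
      define \<sigma> where "\<sigma> = map (\<lambda>x. x - 2) xs"
      have "map (\<lambda>x. x+2) \<sigma> = xs" unfolding \<sigma>_def map_map
      proof (rule map_idI)
        fix z assume "z \<in> set xs" then have "2 \<le> z" by (rule mem2)
        then show "((\<lambda>x. x+2) \<circ> (\<lambda>x. x-2)) z = z" by simp
      qed
      then have eq: "\<pi> = [2,1] @ map (\<lambda>x. x+2) \<sigma>" using px x2 by simp
      then have "\<sigma> \<in> Fish_av (n-2) PP" using memB[OF n2] F by simp
      then show ?thesis using eq n2 unfolding BB_def by auto
    next
      case 3 then show ?thesis by simp
    qed
  qed
next
  show "AA n \<union> (if n \<ge> 2 then BB n else {}) \<union> (if n \<ge> 3 then {T n} else {}) \<subseteq> Fish_av n PP"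
    using memA[OF n] memB T_mem unfolding AA_def BB_def by auto
qed

lemma Fish_finite: "finite (Fish_av n PP)"
proof (rule finite_subset)
  show "Fish_av n PP \<subseteq> {xs. set xs \<subseteq> {1..n} \<and> length xs = n}"
    using Fish_avD(1,3) by blast
  show "finite {xs. set xs \<subseteq> {1..n} \<and> length xs = n}"
    by (rule finite_lists_length_eq) simp
qed

lemma inj_shift: "inj (\<lambda>\<sigma>. pre @ map (\<lambda>x. x+(k::nat)) \<sigma>)"
  by (rule injI) (simp add: inj_map_eq_map inj_def)

lemma cardA: "card (AA n) = card (Fish_av (n-1) PP)"
  unfolding AA_def by (rule card_image) (rule inj_on_subset[OF inj_shift], simp)
lemma cardB: "card (BB n) = card (Fish_av (n-2) PP)"
  unfolding BB_def by (rule card_image) (rule inj_on_subset[OF inj_shift], simp)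

lemma card_rec:
  assumes n: "n \<ge> 1"
  shows "card (Fish_av n PP) = card (Fish_av (n-1) PP) + (if n \<ge> 2 then card (Fish_av (n-2) PP) else 0) + (if n \<ge> 3 then 1 else 0)"
proof -
  have fA: "finite (AA n)" unfolding AA_def using Fish_finite by simp
  have fB: "finite (BB n)" unfolding BB_def using Fish_finite by simp
  have hA: "\<And>x. x \<in> AA n \<Longrightarrow> x!0 = 1" unfolding AA_def by auto
  have hB: "\<And>x. x \<in> BB n \<Longrightarrow> x!0 = 2" unfolding BB_def by auto
  have hT: "T n ! 0 = 3" by (simp add: T_def)
  have d0: False if "x \<in> AA n" "x \<in> BB n" for x using hA[OF that(1)] hB[OF that(2)] by simp
  have d1: "AA n \<inter> (if n \<ge> 2 then BB n else {}) = {}" using d0 by auto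
  have d2: "(AA n \<union> (if n \<ge> 2 then BB n else {})) \<inter> (if n \<ge> 3 then {T n} else {}) = {}"
  proof -
    have "T n \<notin> AA n" "T n \<notin> BB n" using hA[of "T n"] hB[of "T n"] hT by auto
    then show ?thesis by auto
  qed
  have "card (Fish_av n PP) = card (AA n \<union> (if n \<ge> 2 then BB n else {})) + card (if n \<ge> 3 then {T n} else {} :: nat list set)"
    unfolding decomp[OF n] by (rule card_Un_disjoint) (use fA fB d2 in auto)
  also have "card (AA n \<union> (if n \<ge> 2 then BB n else {})) = card (AA n) + card (if n \<ge> 2 then BB n else {})"
    by (rule card_Un_disjoint) (use fA fB d1 in auto)
  finally show ?thesis using cardA cardB by simp
qed

lemma fib1_pos: "fib1 k \<ge> 1"
  by (induction k rule: fib1.induct) auto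

lemma main_count: "n \<ge> 1 \<Longrightarrow> card (Fish_av n PP) = fib1 (n + 1) - 1"
proof (induction n rule: less_induct)
  case (less n)
  have c0: "card (Fish_av 0 PP) = 1" by (subst Fish_av0) simp
  consider "n = 1" | "n = 2" | "n \<ge> 3" using less.prems by linarith
  then show ?case
  proof cases
    case 1 then show ?thesis using card_rec[of 1] c0 by (simp add: numeral_eq_Suc)
  next
    case 2
    have "card (Fish_av 1 PP) = 1" using card_rec[of 1] c0 by simp
    then show ?thesis using card_rec[of 2] c0 2 by (simp add: numeral_eq_Suc)
  next
    case 3
    have a: "card (Fish_av (n-1) PP) = fib1 n - 1" using less.IH[of "n-1"] 3 by simp
    have b: "card (Fish_av (n-2) PP) = fib1 (n-1) - 1" using less.IH[of "n-2"] 3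
      by (simp add: Suc_diff_Suc numeral_2_eq_2)
    obtain t where t: "n = Suc (Suc t)" using 3 by (intro that[of "n-2"]) simp
    have "fib1 (n+1) = fib1 n + fib1 (n-1)" using t by simp
    moreover have "card (Fish_av n PP) = (fib1 n - 1) + (fib1 (n-1) - 1) + 1"
      using card_rec[of n] 3 a b by simp
    moreover have "fib1 n \<ge> 1" "fib1 (n-1) \<ge> 1" using fib1_pos by auto
    ultimately show ?thesis by linarith
  qed
qed

theorem mainTheorem15:
  fixes n :: nat
  assumes "n \<ge> 1"
  shows "card (Fish_av n [[3,2,1],[3,1,2,4],[4,1,2,3]]) = fib1 (n + 1) - 1"
  using main_count[OF assms] .

end
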